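(* Let $\mathbf v,\mathbf w,\mathbf k,\boldsymbol\ell$ be $m$-tuples of positive integers with $k_i\ge2$ for all $i$, $\mathbf k\le\mathbf w\le\mathbf v$ and $\mathbf k\le\boldsymbol\ell\le\mathbf v$ (entrywise). Then $C(\mathbf v,\mathbf k,2)\ge C(\mathbf w,\mathbf k,2)$ and $C(\mathbf v,\mathbf k,2)\ge C(\mathbf v,\boldsymbol\ell,2)$.
   Context: For $m$-tuples $\mathbf a,\mathbf b$ of positive integers with $\mathbf b\le\mathbf a$ entrywise: let $X_1,\dots,X_m$ be pairwise disjoint sets with $|X_i|=a_i$; a block is an $m$-tuple $(B_1,\dots,B_m)$ with $B_i\subseteq X_i$, $|B_i|=b_i$; an $m$-tuple of sets $(T_1,\dots,T_m)$ is $(\mathbf a,\mathbf b,2)$-admissible if $T_i\subseteq X_i$, $|T_i|\le b_i$ and $\sum|T_i|=2$, and is contained in a block if $T_i\subseteq B_i$ for all $i$. A ${\rm GC}(\mathbf a,\mathbf b,2)$ is a finite family (repetitions allowed) of blocks containing every admissible tuple in at least one block; $C(\mathbf a,\mathbf b,2)$ is the minimum number of blocks. *)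

theory Defs
  imports Main
begin

(* m-tuples are functions nat => nat, only indices i < m matter.
   The ground set X_i is modelled as {..<a i} tagged by the index i
   (the tuple position), so the X_i are disjoint by construction. *)

definition is_block :: "nat \<Rightarrow> (nat \<Rightarrow> nat) \<Rightarrow> (nat \<Rightarrow> nat) \<Rightarrow> (nat \<Rightarrow> nat set) \<Rightarrow> bool" where
  "is_block m a b B \<longleftrightarrow> (\<forall>i<m. B i \<subseteq> {..<a i} \<and> card (B i) = b i)"

definition admissible :: "nat \<Rightarrow> (nat \<Rightarrow> nat) \<Rightarrow> (nat \<Rightarrow> nat) \<Rightarrow> nat \<Rightarrow> (nat \<Rightarrow> nat set) \<Rightarrow> bool" where
  "admissible m a b t T \<longleftrightarrow>
     (\<forall>i<m. T i \<subseteq> {..<a i} \<and> card (T i) \<le> b i) \<and> (\<Sum>i<m. card (T i)) = t"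

definition contained_in :: "nat \<Rightarrow> (nat \<Rightarrow> nat set) \<Rightarrow> (nat \<Rightarrow> nat set) \<Rightarrow> bool" where
  "contained_in m T B \<longleftrightarrow> (\<forall>i<m. T i \<subseteq> B i)"

(* a GC(a,b,t): a finite family of blocks (list, repetitions allowed) *)
definition is_GC :: "nat \<Rightarrow> (nat \<Rightarrow> nat) \<Rightarrow> (nat \<Rightarrow> nat) \<Rightarrow> nat \<Rightarrow> (nat \<Rightarrow> nat set) list \<Rightarrow> bool" where
  "is_GC m a b t F \<longleftrightarrow> (\<forall>B\<in>set F. is_block m a b B) \<and>
     (\<forall>T. admissible m a b t T \<longrightarrow> (\<exists>B\<in>set F. contained_in m T B))"

definition GC_num :: "nat \<Rightarrow> (nat \<Rightarrow> nat) \<Rightarrow> (nat \<Rightarrow> nat) \<Rightarrow> nat \<Rightarrow> nat" where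
  "GC_num m a b t = (LEAST n. \<exists>F. is_GC m a b t F \<and> length F = n)"

end

theory Submission
  imports Defs "HOL-Library.FuncSet"
begin

lemma ext_set:
  assumes "finite A" "T \<subseteq> A" "card T \<le> n" "n \<le> card A"
  shows "\<exists>B. T \<subseteq> B \<and> B \<subseteq> A \<and> card B = n"
proof -
  have "card (A - T) = card A - card T" using assms by (simp add: card_Diff_subset finite_subset)
  then have "n - card T \<le> card (A - T)" using assms by simp
  then obtain C where C: "C \<subseteq> A - T" "card C = n - card T"
    using obtain_subset_with_card_n by metis
  have fT: "finite T" using assms finite_subset by blast
  have fC: "finite C" using C assms finite_subset by (meson finite_Diff)
  have "card (T \<union> C) = card T + card C" using C fT fC by (intro card_Un_disjoint) auto
  then show ?thesis using C assms by (intro exI[of _ "T \<union> C"]) auto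
qed

lemma GC_le:
  assumes "is_GC m a b t F"
  shows "GC_num m a b t \<le> length F"
  unfolding GC_num_def using assms by (intro Least_le) blast

lemma GC_map:
  assumes gc: "is_GC m a b t F"
    and blk: "\<And>B. is_block m a b B \<Longrightarrow> is_block m a' b' (f B)"
    and adm: "\<And>T. admissible m a' b' t T \<Longrightarrow> admissible m a b t T"
    and cont: "\<And>T B. is_block m a b B \<Longrightarrow> admissible m a' b' t T \<Longrightarrow> contained_in m T B \<Longrightarrow> contained_in m T (f B)"
  shows "is_GC m a' b' t (map f F)"
  unfolding is_GC_def
proof (intro conjI ballI allI impI)
  fix B assume "B \<in> set (map f F)"
  then obtain B0 where "B0 \<in> set F" "B = f B0" by auto
  then show "is_block m a' b' B" using gc blk unfolding is_GC_def by blast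
next
  fix T assume T: "admissible m a' b' t T"
  then obtain B0 where "B0 \<in> set F" "contained_in m T B0"
    using gc adm unfolding is_GC_def by blast
  moreover have "is_block m a b B0" using gc \<open>B0 \<in> set F\<close> unfolding is_GC_def by blast
  ultimately show "\<exists>B\<in>set (map f F). contained_in m T B" using cont T by auto
qed

lemma GC_exists:
  assumes "\<forall>i<m. b i \<le> a i"
  shows "\<exists>F. is_GC m a b t F"
proof -
  let ?S = "{B \<in> Pi\<^sub>E {..<m} (\<lambda>i. Pow {..<a i}). is_block m a b B}"
  have "?S \<subseteq> Pi\<^sub>E {..<m} (\<lambda>i. Pow {..<a i})" by blast
  moreover have "finite (Pi\<^sub>E {..<m} (\<lambda>i. Pow {..<a i}))" by (intro finite_PiE) auto
  ultimately have fin: "finite ?S" by (rule finite_subset)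
  obtain F where F: "set F = ?S" using finite_list[OF fin] by (elim exE)
  have "is_GC m a b t F"
    unfolding is_GC_def
  proof (intro conjI allI impI)
    show "\<forall>B\<in>set F. is_block m a b B" using F by auto
  next
    fix T assume T: "admissible m a b t T"
    have ex: "\<forall>i<m. \<exists>B. T i \<subseteq> B \<and> B \<subseteq> {..<a i} \<and> card B = b i"
    proof (intro allI impI)
      fix i assume i: "i < m"
      show "\<exists>B. T i \<subseteq> B \<and> B \<subseteq> {..<a i} \<and> card B = b i"
        using T assms i unfolding admissible_def by (intro ext_set) simp_all
    qed
    define g where "g i = (SOME B. T i \<subseteq> B \<and> B \<subseteq> {..<a i} \<and> card B = b i)" for i
    have g: "\<forall>i\<in>{..<m}. T i \<subseteq> g i \<and> g i \<subseteq> {..<a i} \<and> card (g i) = b i"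
    proof
      fix i assume "i \<in> {..<m}"
      then have "\<exists>B. T i \<subseteq> B \<and> B \<subseteq> {..<a i} \<and> card B = b i" using ex by simp
      then show "T i \<subseteq> g i \<and> g i \<subseteq> {..<a i} \<and> card (g i) = b i" unfolding g_def by (rule someI_ex)
    qed
    let ?B = "restrict g {..<m}"
    have "?B \<in> Pi\<^sub>E {..<m} (\<lambda>i. Pow {..<a i})" using g by auto
    moreover have "is_block m a b ?B" using g unfolding is_block_def by simp
    ultimately have Bin: "?B \<in> set F" unfolding F by blast
    have "contained_in m T ?B" using g unfolding contained_in_def by auto
    then show "\<exists>B\<in>set F. contained_in m T B" using Bin by (rule bexI)
  qed
  then show ?thesis by blast
qed

lemma GC_num_attained:
  assumes "\<exists>F. is_GC m a b t F"
  shows "\<exists>F. is_GC m a b t F \<and> length F = GC_num m a b t"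
proof -
  from assms obtain F0 where "is_GC m a b t F0" by (elim exE)
  then have "\<exists>n. \<exists>F. is_GC m a b t F \<and> length F = n" by (intro exI conjI) auto
  then have "\<exists>F. is_GC m a b t F \<and> length F = (LEAST n. \<exists>F. is_GC m a b t F \<and> length F = n)"
    by (rule LeastI_ex)
  then show ?thesis unfolding GC_num_def .
qed

theorem theorem3p17:
  fixes m :: nat and v w k l :: "nat \<Rightarrow> nat"
  assumes "\<forall>i<m. 0 < v i \<and> 0 < w i \<and> 0 < k i \<and> 0 < l i"
    and "\<forall>i<m. 2 \<le> k i"
    and "\<forall>i<m. k i \<le> w i \<and> w i \<le> v i"
    and "\<forall>i<m. k i \<le> l i \<and> l i \<le> v i"
  shows "GC_num m v k 2 \<ge> GC_num m w k 2 \<and> GC_num m v k 2 \<ge> GC_num m v l 2"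
proof -
  have "\<forall>i<m. k i \<le> v i" using assms(3) by (meson order_trans)
  then obtain F where F: "is_GC m v k 2 F" "length F = GC_num m v k 2"
    using GC_exists GC_num_attained by blast
  define f1 where "f1 B = (\<lambda>i. SOME B'. B i \<inter> {..<w i} \<subseteq> B' \<and> B' \<subseteq> {..<w i} \<and> card B' = k i)"
    for B :: "nat \<Rightarrow> nat set"
  define f2 where "f2 B = (\<lambda>i. SOME B'. B i \<subseteq> B' \<and> B' \<subseteq> {..<v i} \<and> card B' = l i)"
    for B :: "nat \<Rightarrow> nat set"
  have f1: "B i \<inter> {..<w i} \<subseteq> f1 B i \<and> f1 B i \<subseteq> {..<w i} \<and> card (f1 B i) = k i"
    if "is_block m v k B" "i < m" for B i
  proof -
    have "card (B i \<inter> {..<w i}) \<le> card (B i)"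
    proof (rule card_mono)
      show "finite (B i)" using that unfolding is_block_def by (meson finite_lessThan finite_subset)
    qed simp
    then have "\<exists>B'. B i \<inter> {..<w i} \<subseteq> B' \<and> B' \<subseteq> {..<w i} \<and> card B' = k i"
      using that assms(3) unfolding is_block_def by (intro ext_set) auto
    then show ?thesis unfolding f1_def by (rule someI_ex)
  qed
  have f2: "B i \<subseteq> f2 B i \<and> f2 B i \<subseteq> {..<v i} \<and> card (f2 B i) = l i"
    if "is_block m v k B" "i < m" for B i
  proof -
    have "\<exists>B'. B i \<subseteq> B' \<and> B' \<subseteq> {..<v i} \<and> card B' = l i"
      using that assms(4) unfolding is_block_def by (intro ext_set) auto
    then show ?thesis unfolding f2_def by (rule someI_ex)
  qed
  have g1: "is_GC m w k 2 (map f1 F)"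
  proof (rule GC_map[OF F(1)])
    fix B assume "is_block m v k B" then show "is_block m w k (f1 B)"
      using f1 unfolding is_block_def by blast
  next
    fix T assume T: "admissible m w k 2 T"
    have "T i \<subseteq> {..<v i}" if "i < m" for i
    proof -
      have "T i \<subseteq> {..<w i}" using T that unfolding admissible_def by simp
      moreover have "{..<w i} \<subseteq> {..<v i}" using assms(3) that by simp
      ultimately show ?thesis by (rule subset_trans)
    qed
    then show "admissible m v k 2 T" using T unfolding admissible_def by simp
  next
    fix T B assume "is_block m v k B" "admissible m w k 2 T" "contained_in m T B"
    then show "contained_in m T (f1 B)"
      using f1 unfolding contained_in_def admissible_def by blast
  qed
  have g2: "is_GC m v l 2 (map f2 F)"
  proof (rule GC_map[OF F(1)])
    fix B assume "is_block m v k B" then show "is_block m v l (f2 B)"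
      using f2 unfolding is_block_def by blast
  next
    fix T assume T: "admissible m v l 2 T"
    have "card (T i) \<le> k i" if "i < m" for i
    proof -
      have "card (T i) \<le> (\<Sum>j<m. card (T j))"
        using that by (intro member_le_sum) auto
      moreover have "(\<Sum>j<m. card (T j)) = 2" using T unfolding admissible_def by simp
      moreover have "2 \<le> k i" using assms(2) that by simp
      ultimately show ?thesis by linarith
    qed
    then show "admissible m v k 2 T" using T unfolding admissible_def by simp
  next
    fix T B assume "is_block m v k B" "admissible m v l 2 T" "contained_in m T B"
    then show "contained_in m T (f2 B)"
      using f2 unfolding contained_in_def by blast
  qed
  show ?thesis using GC_le[OF g1] GC_le[OF g2] F(2) by simp
qed

end
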